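(* Let $\mathbb{F}$ be a field and $n\geq 2$. The matrices $E_{hi}$ for $h\neq i$, $h,i=1,\dots,n$, together with the matrices $E_{hh}-E_{11}-E_{1h}+E_{h1}$ for $2\leq h\leq n$, form a basis of the Lie algebra $\mathfrak{sl}(n,\mathbb{F})$ of traceless $n\times n$ matrices, and each of these matrices has square zero.
   Context: $E_{ij}$ denotes the $n\times n$ matrix with $1$ in entry $(i,j)$ and $0$ elsewhere. *)

theory Defs
  imports "Jordan_Normal_Form.VS_Connect"
begin

text \<open>Matrix units: E n h i is the n x n matrix with 1 in entry (h,i) and 0 elsewhere
  (indices are 0-based, so the paper's index 1 is 0 here).\<close>
definition matrix_unit :: "nat \<Rightarrow> nat \<Rightarrow> nat \<Rightarrow> 'a :: field mat" where
  "matrix_unit n h i = mat n n (\<lambda>(r, c). if r = h \<and> c = i then 1 else 0)"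

definition mat_trace :: "'a :: field mat \<Rightarrow> 'a" where
  "mat_trace A = (\<Sum>i<dim_row A. A $$ (i, i))"

definition sl_carrier :: "nat \<Rightarrow> 'a :: field mat set" where
  "sl_carrier n = {A \<in> carrier_mat n n. mat_trace A = 0}"

definition sl_vs :: "'a :: field itself \<Rightarrow> nat \<Rightarrow> ('a, 'a mat) module" where
  "sl_vs ty n = (module_mat ty n n)\<lparr>carrier := sl_carrier n\<rparr>"

definition sl_square_zero_family :: "nat \<Rightarrow> 'a :: field mat set" where
  "sl_square_zero_family n =
     {matrix_unit n h i | h i. h < n \<and> i < n \<and> h \<noteq> i} \<union>
     {matrix_unit n h h - matrix_unit n 0 0 - matrix_unit n 0 h + matrix_unit n h 0 | h. 1 \<le> h \<and> h < n}"

end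

theory Submission imports Defs begin

lemma trace_add: "A \<in> carrier_mat n n \<Longrightarrow> B \<in> carrier_mat n n \<Longrightarrow> mat_trace (A + B) = mat_trace A + mat_trace B"
  unfolding mat_trace_def by (simp add: sum.distrib)
lemma trace_smult: "A \<in> carrier_mat n n \<Longrightarrow> mat_trace (c \<cdot>\<^sub>m A) = c * mat_trace A"
  unfolding mat_trace_def by (simp add: sum_distrib_left)
lemma trace_zero: "mat_trace (0\<^sub>m n n :: 'a::field mat) = 0"
  unfolding mat_trace_def by simp

lemma sl_vs_vs: "vectorspace class_ring (sl_vs TYPE('a::field) n)"
proof -
  interpret V: vectorspace "class_ring::'a ring" "module_mat TYPE('a) n n" by (rule matrix_vs)
  have "subspace class_ring (sl_carrier n) (module_mat TYPE('a) n n)"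
    unfolding subspace_def submodule_def
    by (auto simp: matrix_vs V.module_axioms sl_carrier_def module_mat_simps class_ring_simps
        trace_add trace_smult trace_zero)
  from V.subspace_is_vs[OF this] show ?thesis unfolding sl_vs_def .
qed

lemma sl_vs_simps: "carrier (sl_vs TYPE('a::field) n) = sl_carrier n"
  "add (sl_vs TYPE('a) n) = (+)" "zero (sl_vs TYPE('a) n) = 0\<^sub>m n n"
  "smult (sl_vs TYPE('a) n) = (\<cdot>\<^sub>m)"
  unfolding sl_vs_def by (auto simp: module_mat_simps)

lemma finsum_entry:
  assumes "finite A" "f \<in> A \<rightarrow> sl_carrier n" "r < n" "c < n"
  shows "finsum (sl_vs TYPE('a::field) n) f A $$ (r,c) = (\<Sum>v\<in>A. f v $$ (r,c))"
  using assms(1,2)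
proof (induction A rule: finite_induct)
  case empty
  interpret S: vectorspace "class_ring::'a ring" "sl_vs TYPE('a) n" by (rule sl_vs_vs)
  show ?case using assms(3,4) by (simp add: sl_vs_simps)
next
  case (insert x F)
  interpret S: vectorspace "class_ring::'a ring" "sl_vs TYPE('a) n" by (rule sl_vs_vs)
  have fF: "f \<in> F \<rightarrow> carrier (sl_vs TYPE('a) n)" "f x \<in> carrier (sl_vs TYPE('a) n)"
    using insert by (auto simp: sl_vs_simps)
  have "finsum (sl_vs TYPE('a) n) f (insert x F) = f x + finsum (sl_vs TYPE('a) n) f F"
    using S.finsum_insert[OF insert(1,2) fF(1) fF(2)] by (simp add: sl_vs_simps)
  moreover have "finsum (sl_vs TYPE('a) n) f F \<in> sl_carrier n"
    using S.finsum_closed[OF fF(1)] by (simp add: sl_vs_simps)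
  ultimately show ?case using insert fF assms(3,4) by (auto simp: sl_vs_simps sl_carrier_def)
qed


definition ent :: "nat \<times> nat \<Rightarrow> nat \<times> nat \<Rightarrow> 'a::field" where
  "ent p q = (if fst p \<noteq> snd p then (if q = p then 1 else 0)
     else (if q = (fst p, fst p) then 1 else 0) - (if q = (0,0) then 1 else 0)
        - (if q = (0, fst p) then 1 else 0) + (if q = (fst p, 0) then 1 else 0))"

definition gm :: "nat \<Rightarrow> nat \<times> nat \<Rightarrow> 'a::field mat" where
  "gm n p = mat n n (ent p)"

definition Iset :: "nat \<Rightarrow> (nat \<times> nat) set" where
  "Iset n = ({..<n} \<times> {..<n}) - {(0,0)}"

lemma Iset_split: "Iset n = {p \<in> {..<n} \<times> {..<n}. fst p \<noteq> snd p} \<union> (\<lambda>k. (k,k)) ` {1..<n}"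
  unfolding Iset_def by auto

lemma closed_form:
  fixes b :: "nat \<times> nat \<Rightarrow> 'a::field"
  assumes "r < n" "c < n"
  shows "(\<Sum>p\<in>Iset n. b p * ent p (r,c)) =
    (if r = c then (if r = 0 then - (\<Sum>k\<in>{1..<n}. b (k,k)) else b (r,r))
     else b (r,c) - (if r = 0 then b (c,c) else 0) + (if c = 0 then b (r,r) else 0))"
proof -
  let ?O = "{p \<in> {..<n} \<times> {..<n}. fst p \<noteq> snd p}"
  let ?D = "(\<lambda>k. (k,k)) ` {1..<n}"
  have disj: "?O \<inter> ?D = {}" by auto
  have "(\<Sum>p\<in>Iset n. b p * ent p (r,c)) = (\<Sum>p\<in>?O. b p * ent p (r,c)) + (\<Sum>p\<in>?D. b p * ent p (r,c))"
    unfolding Iset_split by (rule sum.union_disjoint) (auto)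
  also have "(\<Sum>p\<in>?O. b p * ent p (r,c)) = (\<Sum>p\<in>?O. if p = (r,c) then b p else 0)"
    by (rule sum.cong) (auto simp: ent_def)
  also have "\<dots> = (if r \<noteq> c then b (r,c) else 0)"
  proof -
    have "finite ?O" by (rule finite_subset[of _ "{..<n} \<times> {..<n}"]) auto
    then show ?thesis using assms by (simp add: sum.delta)
  qed
  also have "(\<Sum>p\<in>?D. b p * ent p (r,c)) = (\<Sum>k\<in>{1..<n}. b (k,k) * ent (k,k) (r,c))"
    by (subst sum.reindex) (auto simp: inj_on_def)
  also have "\<dots> = (\<Sum>k\<in>{1..<n}. (if k = r \<and> r = c then b (k,k) else 0))
      - (\<Sum>k\<in>{1..<n}. (if r = 0 \<and> c = 0 then b (k,k) else 0))
      - (\<Sum>k\<in>{1..<n}. (if k = c \<and> r = 0 then b (k,k) else 0))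
      + (\<Sum>k\<in>{1..<n}. (if k = r \<and> c = 0 then b (k,k) else 0))"
  proof -
    have "(\<Sum>k\<in>{1..<n}. b (k,k) * ent (k,k) (r,c)) = (\<Sum>k\<in>{1..<n}. (if k = r \<and> r = c then b (k,k) else 0)
      - (if r = 0 \<and> c = 0 then b (k,k) else 0)
      - (if k = c \<and> r = 0 then b (k,k) else 0)
      + (if k = r \<and> c = 0 then b (k,k) else 0))"
      by (rule sum.cong) (auto simp: ent_def)
    then show ?thesis by (simp only: sum.distrib sum_subtractf)
  qed
  also have "\<dots> = (if r = c \<and> 1 \<le> r then b (r,r) else 0)
      - (if r = 0 \<and> c = 0 then (\<Sum>k\<in>{1..<n}. b (k,k)) else 0)
      - (if r = 0 \<and> 1 \<le> c then b (c,c) else 0)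
      + (if c = 0 \<and> 1 \<le> r then b (r,r) else 0)"
    using assms by (simp add: sum.delta sum.delta' conj_commute)
  finally show ?thesis using assms by auto
qed


lemma matrix_unit_entry: "r < n \<Longrightarrow> c < n \<Longrightarrow> (matrix_unit n h i :: 'a::field mat) $$ (r,c) = (if r = h \<and> c = i then 1 else 0)"
  unfolding matrix_unit_def by simp

lemma matrix_unit_carrier[simp]: "(matrix_unit n h i :: 'a::field mat) \<in> carrier_mat n n"
  unfolding matrix_unit_def by simp

lemma gm_entry: "r < n \<Longrightarrow> c < n \<Longrightarrow> gm n p $$ (r,c) = ent p (r,c)"
  unfolding gm_def by simp

lemma gm_dims[simp]: "dim_row (gm n p) = n" "dim_col (gm n p) = n"
  unfolding gm_def by auto

lemma gm_carrier_mat[simp]: "gm n p \<in> carrier_mat n n"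
  unfolding gm_def by simp

lemma mu_dims[simp]: "dim_row (matrix_unit n h i) = n" "dim_col (matrix_unit n h i) = n"
  unfolding matrix_unit_def by auto
lemma off: "h \<noteq> i \<Longrightarrow> matrix_unit n h i = (gm n (h,i) :: 'a::field mat)"
    by (rule eq_matI) (auto simp: matrix_unit_entry gm_entry ent_def)
lemma dg: "1 \<le> h \<Longrightarrow> matrix_unit n h h - matrix_unit n 0 0 - matrix_unit n 0 h + matrix_unit n h 0 = (gm n (h,h) :: 'a::field mat)"
    by (rule eq_matI) (auto simp: matrix_unit_entry gm_entry ent_def)

lemma family_eq: "sl_square_zero_family n = (gm n ` Iset n :: 'a::field mat set)"
proof -
  show ?thesis
  proof (intro equalityI subsetI)
      fix M assume "M \<in> sl_square_zero_family n"
      then consider (a) h i where "h < n" "i < n" "h \<noteq> i" "M = matrix_unit n h i"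
        | (b) h where "1 \<le> h" "h < n" "M = matrix_unit n h h - matrix_unit n 0 0 - matrix_unit n 0 h + matrix_unit n h 0"
        unfolding sl_square_zero_family_def by blast
      then show "M \<in> gm n ` Iset n"
      proof cases
        case a
        then have "(h,i) \<in> Iset n" unfolding Iset_def by auto
        then show ?thesis using a off by blast
      next
        case b
        then have "(h,h) \<in> Iset n" unfolding Iset_def by auto
        then show ?thesis using b dg by blast
      qed
    next
      fix M assume "M \<in> gm n ` Iset n"
      then obtain h i where hi: "(h,i) \<in> Iset n" "M = gm n (h,i)" by auto
      show "M \<in> sl_square_zero_family n"
      proof (cases "h = i")
        case True
        then have "1 \<le> h" "h < n" using hi(1) unfolding Iset_def by auto
        then have "M = matrix_unit n h h - matrix_unit n 0 0 - matrix_unit n 0 h + matrix_unit n h 0"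
          using hi True dg[OF \<open>1 \<le> h\<close>, of n] by metis
        then show ?thesis unfolding sl_square_zero_family_def using \<open>1 \<le> h\<close> \<open>h < n\<close> by blast
      next
        case False
        then have "h < n" "i < n" using hi(1) unfolding Iset_def by auto
        moreover have "M = matrix_unit n h i" using hi off[OF False, of n] by metis
        ultimately show ?thesis unfolding sl_square_zero_family_def using False by blast
      qed
  qed
qed

lemma gm_inj: "inj_on (gm n :: _ \<Rightarrow> 'a::field mat) (Iset n)"
proof (rule inj_onI)
  fix p q assume p: "p \<in> Iset n" and q: "q \<in> Iset n" and eq: "(gm n p :: 'a mat) = gm n q"
  obtain h i where pp: "p = (h,i)" by force
  obtain h' i' where qq: "q = (h',i')" by force
  have E: "ent p (r,c) = (ent q (r,c) :: 'a)" if "r < n" "c < n" for r c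
    using eq gm_entry[OF that, of p] gm_entry[OF that, of q] by (metis (no_types))
  have b: "h < n" "i < n" "h' < n" "i' < n" "\<not>(h = 0 \<and> i = 0)" "\<not>(h' = 0 \<and> i' = 0)"
    using p q pp qq unfolding Iset_def by auto
  have e1: "ent p (h,i) = (ent q (h,i) :: 'a)" using E b by auto
  have e2: "ent p (h',i') = (ent q (h',i') :: 'a)" using E b by auto
  have e3: "ent p (h,h) = (ent q (h,h) :: 'a)" using E b by auto
  have e4: "ent p (h',h') = (ent q (h',h') :: 'a)" using E b by auto
  show "p = q"
  proof (cases "h = i")
    case True
    note T = True
    show ?thesis
    proof (cases "h' = i'")
      case True
      then show ?thesis using e3 T b unfolding pp qq ent_def by (auto split: if_splits)
    next
      case False
      then show ?thesis using e3 T b unfolding pp qq ent_def by (auto split: if_splits)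
    qed
  next
    case False
    note T = False
    show ?thesis
    proof (cases "h' = i'")
      case True
      then show ?thesis using e4 T b unfolding pp qq ent_def by (auto split: if_splits)
    next
      case False
      then show ?thesis using e1 T b unfolding pp qq ent_def by (auto split: if_splits)
    qed
  qed
qed

lemma gm_trace: "p \<in> Iset n \<Longrightarrow> mat_trace (gm n p :: 'a::field mat) = 0"
proof -
  assume p: "p \<in> Iset n"
  obtain h i where pp: "p = (h,i)" by force
  have b: "h < n" "i < n" "\<not>(h = 0 \<and> i = 0)" using p pp unfolding Iset_def by auto
  have "mat_trace (gm n p :: 'a mat) = (\<Sum>r<n. ent p (r,r))"
    unfolding mat_trace_def by (simp add: gm_entry)
  also have "\<dots> = (\<Sum>r<n. (if h = i \<and> r = h then 1 else 0) - (if h = i \<and> r = 0 then 1 else 0))"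
    by (rule sum.cong) (use b in \<open>auto simp: pp ent_def\<close>)
  also have "\<dots> = 0"
    using b by (cases "h = i") (simp_all add: sum_subtractf)
  finally show ?thesis .
qed

lemma gm_square: "p \<in> Iset n \<Longrightarrow> (gm n p :: 'a::field mat) * gm n p = 0\<^sub>m n n"
proof -
  assume p: "p \<in> Iset n"
  obtain h i where pp: "p = (h,i)" by force
  have b: "h < n" "i < n" "\<not>(h = 0 \<and> i = 0)" using p pp unfolding Iset_def by auto
  show ?thesis
  proof (rule eq_matI)
    fix r c assume rc: "r < dim_row (0\<^sub>m n n :: 'a mat)" "c < dim_col (0\<^sub>m n n :: 'a mat)"
    then have rc': "r < n" "c < n" by auto
    have "(gm n p * gm n p :: 'a mat) $$ (r,c) = (\<Sum>j<n. ent p (r,j) * ent p (j,c))"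
      using rc' by (simp add: gm_entry scalar_prod_def atLeast0LessThan)
    also have "\<dots> = (0::'a)"
    proof (cases "h = i")
      case False
      then show ?thesis by (intro sum.neutral) (auto simp: pp ent_def)
    next
      case True
      define u :: "nat \<Rightarrow> 'a" where "u x = (if x = h then 1 else 0) - (if x = 0 then 1 else 0)" for x
      define v :: "nat \<Rightarrow> 'a" where "v x = (if x = h then 1 else 0) + (if x = 0 then 1 else 0)" for x
      have hn0: "h \<noteq> 0" using b True by auto
      have f: "ent p (x,y) = u x * v y" for x y
        using hn0 by (auto simp: pp True ent_def u_def v_def)
      have "(\<Sum>j<n. ent p (r,j) * ent p (j,c)) = u r * v c * (\<Sum>j<n. v j * u j)"
        by (simp add: f sum_distrib_left algebra_simps)
      also have "(\<Sum>j<n. v j * u j) = (\<Sum>j<n. (if j = h then 1 else 0) - (if j = 0 then 1 else 0))"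
        by (rule sum.cong) (use hn0 in \<open>auto simp: u_def v_def\<close>)
      also have "\<dots> = 0" using b by (simp add: sum_subtractf)
      finally show ?thesis by simp
    qed
    finally have X: "(gm n p * gm n p :: 'a mat) $$ (r,c) = 0" .
    show "(gm n p * gm n p :: 'a mat) $$ (r,c) = 0\<^sub>m n n $$ (r,c)" by (subst index_zero_mat(1)[OF rc']) (rule X)
  qed auto
qed


lemma lincomb_entry:
  assumes "r < n" "c < n"
  shows "module.lincomb (sl_vs TYPE('a::field) n) a (gm n ` Iset n) $$ (r,c)
     = (\<Sum>p\<in>Iset n. a (gm n p) * ent p (r,c))"
proof -
  interpret S: vectorspace "class_ring :: 'a ring" "sl_vs TYPE('a) n" by (rule sl_vs_vs)
  have finB: "finite (gm n ` Iset n :: 'a mat set)" unfolding Iset_def by auto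
  have Bsub: "(gm n ` Iset n :: 'a mat set) \<subseteq> sl_carrier n"
    using gm_trace by (auto simp: sl_carrier_def)
  have cl: "(\<lambda>v. a v \<cdot>\<^sub>m v) \<in> (gm n ` Iset n :: 'a mat set) \<rightarrow> sl_carrier n"
  proof
    fix v assume "v \<in> (gm n ` Iset n :: 'a mat set)"
    then have "v \<in> carrier (sl_vs TYPE('a) n)" using Bsub by (auto simp: sl_vs_simps)
    then have "a v \<odot>\<^bsub>sl_vs TYPE('a) n\<^esub> v \<in> carrier (sl_vs TYPE('a) n)"
      by (intro S.smult_closed) (auto simp: class_ring_simps)
    then show "a v \<cdot>\<^sub>m v \<in> sl_carrier n" by (simp add: sl_vs_simps)
  qed
  have "S.lincomb a (gm n ` Iset n) = finsum (sl_vs TYPE('a) n) (\<lambda>v. a v \<cdot>\<^sub>m v) (gm n ` Iset n)"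
    unfolding S.lincomb_def by (simp add: sl_vs_simps)
  then have "S.lincomb a (gm n ` Iset n) $$ (r,c) = (\<Sum>v\<in>gm n ` Iset n. (a v \<cdot>\<^sub>m v) $$ (r,c))"
    using finsum_entry[OF finB cl assms] by simp
  also have "\<dots> = (\<Sum>v\<in>gm n ` Iset n. a v * v $$ (r,c))"
    by (rule sum.cong) (use assms in auto)
  also have "\<dots> = (\<Sum>p\<in>Iset n. a (gm n p) * ent p (r,c))"
    by (subst sum.reindex[OF gm_inj]) (use assms in \<open>simp add: gm_entry\<close>)
  finally show ?thesis .
qed

theorem proposition1:
  fixes n :: nat
  assumes "n \<ge> 2"
  shows "vectorspace.basis (class_ring :: 'a :: field ring) (sl_vs TYPE('a) n)
           (sl_square_zero_family n)
       \<and> card (sl_square_zero_family n :: 'a mat set) = n^2 - 1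
       \<and> (\<forall>A \<in> (sl_square_zero_family n :: 'a mat set). A * A = 0\<^sub>m n n)"
proof -
  interpret S: vectorspace "class_ring :: 'a ring" "sl_vs TYPE('a) n" by (rule sl_vs_vs)
  let ?B = "gm n ` Iset n :: 'a mat set"
  have fam: "sl_square_zero_family n = ?B" by (rule family_eq)
  have finB: "finite ?B" unfolding Iset_def by auto
  have Bsub: "?B \<subseteq> carrier (sl_vs TYPE('a) n)"
    using gm_trace by (auto simp: sl_carrier_def sl_vs_simps)
  have li: "S.lin_indpt ?B"
  proof (rule S.finite_lin_indpt2[OF finB Bsub])
    fix a assume z: "S.lincomb a ?B = \<zero>\<^bsub>sl_vs TYPE('a) n\<^esub>"
    define b where "b p = a (gm n p)" for p
    have Z: "(\<Sum>p\<in>Iset n. b p * ent p (r,c)) = 0" if "r < n" "c < n" for r c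
      using lincomb_entry[OF that, of a] z that by (simp add: sl_vs_simps b_def)
    have D: "b (h,h) = 0" if "1 \<le> h" "h < n" for h
      using Z[of h h] closed_form[of h n h b] that by simp
    have all: "b (h,i) = 0" if "(h,i) \<in> Iset n" for h i
    proof -
      have hi: "h < n" "i < n" "\<not> (h = 0 \<and> i = 0)" using that unfolding Iset_def by auto
      show ?thesis
      proof (cases "h = i")
        case True then show ?thesis using D hi by auto
      next
        case False
        have "b (h,i) - (if h = 0 then b (i,i) else 0) + (if i = 0 then b (h,h) else 0) = 0"
          using Z[OF hi(1,2)] closed_form[OF hi(1,2), of b] False by simp
        moreover have "(if h = 0 then b (i,i) else 0) = 0" using D hi by auto
        moreover have "(if i = 0 then b (h,h) else 0) = 0" using D hi by auto
        ultimately show ?thesis by simp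
      qed
    qed
    show "\<forall>v\<in>?B. a v = \<zero>\<^bsub>class_ring\<^esub>"
      using all unfolding b_def by (auto simp: class_ring_simps)
  qed
  have gen: "S.gen_set ?B"
  proof
    show "S.span ?B \<subseteq> carrier (sl_vs TYPE('a) n)" by (rule S.span_is_subset2[OF Bsub])
    show "carrier (sl_vs TYPE('a) n) \<subseteq> S.span ?B"
    proof
      fix A assume "A \<in> carrier (sl_vs TYPE('a) n)"
      then have A: "A \<in> carrier_mat n n" "mat_trace A = 0" by (auto simp: sl_vs_simps sl_carrier_def)
      define b where "b p = (case p of (h,i) \<Rightarrow> if h = i then A $$ (h,h) else if h = 0 then A $$ (0,i) + A $$ (i,i)
          else if i = 0 then A $$ (h,0) - A $$ (h,h) else A $$ (h,i))" for p
      define a where "a (v::'a mat) = b (the_inv_into (Iset n) (gm n) v)" for v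
      have ab: "a (gm n p) = b p" if "p \<in> Iset n" for p
        unfolding a_def using the_inv_into_f_f[OF gm_inj[where 'a='a] that] by simp
      have tr: "A $$ (0,0) = - (\<Sum>k\<in>{1..<n}. A $$ (k,k))"
      proof -
        have "0 = (\<Sum>k\<in>{0..<n}. A $$ (k,k))" using A unfolding mat_trace_def by (simp add: atLeast0LessThan)
        also have "\<dots> = A $$ (0,0) + (\<Sum>k\<in>{1..<n}. A $$ (k,k))"
          using assms by (subst sum.atLeast_Suc_lessThan) auto
        finally show ?thesis by (simp add: eq_neg_iff_add_eq_0)
      qed
      have "S.lincomb a ?B = A"
      proof (rule eq_matI)
        have lc: "S.lincomb a ?B \<in> carrier (sl_vs TYPE('a) n)"
          by (rule S.lincomb_closed[OF Bsub]) (auto simp: class_ring_simps)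
        then show "dim_row (S.lincomb a ?B) = dim_row A" "dim_col (S.lincomb a ?B) = dim_col A"
          using A by (auto simp: sl_vs_simps sl_carrier_def)
        fix r c assume "r < dim_row A" "c < dim_col A"
        then have rc: "r < n" "c < n" using A by auto
        have "S.lincomb a ?B $$ (r,c) = (\<Sum>p\<in>Iset n. b p * ent p (r,c))"
          unfolding lincomb_entry[OF rc] by (rule sum.cong) (auto simp: ab)
        also have "\<dots> = A $$ (r,c)"
          unfolding closed_form[OF rc] using tr by (auto simp: b_def)
        finally show "S.lincomb a ?B $$ (r,c) = A $$ (r,c)" .
      qed
      then show "A \<in> S.span ?B"
      proof -
        have "a \<in> ?B \<rightarrow> carrier (class_ring :: 'a ring)" by (auto simp: class_ring_simps)
        then show ?thesis unfolding S.span_def using finB \<open>S.lincomb a ?B = A\<close> by blast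
      qed
    qed
  qed
  have basis: "S.basis ?B" unfolding S.basis_def using li gen Bsub by auto
  have cI: "card (Iset n) = n^2 - 1"
  proof -
    have "(0,0) \<in> {..<n} \<times> {..<n}" using assms by auto
    then show ?thesis unfolding Iset_def by (simp add: card_Diff_singleton power2_eq_square)
  qed
  have card: "card ?B = n^2 - 1" using card_image[OF gm_inj[where 'a='a, of n]] cI by simp
  have sq: "\<forall>A\<in>?B. A * A = 0\<^sub>m n n" using gm_square by auto
  show ?thesis using basis card sq fam by simp
qed

end
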